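(* There is a deterministic distributed dynamic data structure for triangle membership listing which handles edge insertions and deletions in $O(1)$ amortized rounds.
   Context: Highly dynamic network model: a synchronous network on a fixed set $V$ of $n$ nodes with unique identifiers starts as the empty graph; at the beginning of round $i$ the graph is $G_i=(V,E_i)$, obtained from the previous graph by an adversary inserting and/or deleting an arbitrary (unbounded) set of edges. At the start of each round every node is notified only of the insertions/deletions of edges incident to it; then each node may send a message of $O(\log n)$ bits to each of its current neighbors. A distributed dynamic data structure consists of a local part $DS_v$ at each node $v$; at the end of every round, $DS_v$ may be queried and must answer immediately, without any further communication, either with a correct answer to the query or with the answer $\texttt{inconsistent}$. The amortized round complexity is at most $k$ if for every round $i$, the number of rounds up to round $i$ in which at least one node $v$ has $DS_v$ in an inconsistent state, divided by the total number of topology changes (edge insertions/deletions) that occurred up to round $i$, is at most $k$. Triangle membership listing: the data structure $DS_v$ at each node $v$ must respond at the end of round $i$ to a query of the form $\{v,u,w\}$ with $\texttt{true}$ if $\{v,u,w\}$ forms a triangle in $G_i$, $\texttt{false}$ if it does not, or $\texttt{inconsistent}$. *)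

theory Defs
  imports Main
begin

text \<open>A dynamic graph is a sequence G :: nat => nat set set of edge sets, G 0 being the
  empty graph before round 1; G i is the graph of round i (i >= 1).\<close>

definition valid_dyn_graph :: "nat \<Rightarrow> (nat \<Rightarrow> nat set set) \<Rightarrow> bool" where
  "valid_dyn_graph n G \<longleftrightarrow> G 0 = {} \<and>
     (\<forall>i. \<forall>e\<in>G i. \<exists>u v. e = {u, v} \<and> u \<noteq> v \<and> u < n \<and> v < n)"

definition changes :: "(nat \<Rightarrow> nat set set) \<Rightarrow> nat \<Rightarrow> nat" where
  "changes G i = card ((G i - G (i - 1)) \<union> (G (i - 1) - G i))"

text \<open>Local notifications of node v at the start of round i: the other endpoints of
  inserted / deleted incident edges.\<close>
definition inserted :: "(nat \<Rightarrow> nat set set) \<Rightarrow> nat \<Rightarrow> nat \<Rightarrow> nat set" where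
  "inserted G i v = {u. {v, u} \<in> G i \<and> {v, u} \<notin> G (i - 1)}"

definition deleted :: "(nat \<Rightarrow> nat set set) \<Rightarrow> nat \<Rightarrow> nat \<Rightarrow> nat set" where
  "deleted G i v = {u. {v, u} \<notin> G i \<and> {v, u} \<in> G (i - 1)}"

datatype answer = AnsTrue | AnsFalse | AnsInconsistent

text \<open>A deterministic distributed algorithm with local states of (fixed, sufficiently rich)
  type nat list set.
  In round i node v, in local state s and notified of (ins, del), sends
  msg n v s ins del u to each current neighbour u (None = no message; Some m a message
  whose content is the number m), and then moves to state upd n v s ins del inbox where
  inbox u is the message received from u.  query n v s u w is the answer of DS_v
  (local state s) to the query {v,u,w}, computed without communication.\<close>
record alg =
  init  :: "nat \<Rightarrow> nat \<Rightarrow> nat list set"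
  msg   :: "nat \<Rightarrow> nat \<Rightarrow> nat list set \<Rightarrow> nat set \<Rightarrow> nat set \<Rightarrow> nat \<Rightarrow> nat option"
  upd   :: "nat \<Rightarrow> nat \<Rightarrow> nat list set \<Rightarrow> nat set \<Rightarrow> nat set \<Rightarrow> (nat \<Rightarrow> nat option) \<Rightarrow> nat list set"
  query :: "nat \<Rightarrow> nat \<Rightarrow> nat list set \<Rightarrow> nat \<Rightarrow> nat \<Rightarrow> answer"

text \<open>Global execution: run A n G i v is the local state DS_v at the end of round i.
  The message from u to v in round i is computed from us state at the end of round i-1
  and us notifications of round i.\<close>
fun run :: "alg \<Rightarrow> nat \<Rightarrow> (nat \<Rightarrow> nat set set) \<Rightarrow> nat \<Rightarrow> nat \<Rightarrow> nat list set" where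
  "run A n G 0 = (\<lambda>v. init A n v)"
| "run A n G (Suc i) = (\<lambda>v. upd A n v (run A n G i v) (inserted G (Suc i) v) (deleted G (Suc i) v)
      (\<lambda>u. if {u, v} \<in> G (Suc i)
            then msg A n u (run A n G i u) (inserted G (Suc i) u) (deleted G (Suc i) u) v
            else None))"

text \<open>O(log n)-bit messages: every message actually sent along an edge is a number below
  (n+1)^c, i.e. has at most c * log2 (n+1) bits.\<close>
definition msgs_bounded :: "alg \<Rightarrow> nat \<Rightarrow> nat \<Rightarrow> (nat \<Rightarrow> nat set set) \<Rightarrow> bool" where
  "msgs_bounded A c n G \<longleftrightarrow>
     (\<forall>i u v m. u < n \<and> v < n \<and> {u, v} \<in> G (Suc i) \<and>
        msg A n u (run A n G i u) (inserted G (Suc i) u) (deleted G (Suc i) u) v = Some m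
        \<longrightarrow> m < (n + 1) ^ c)"

definition is_triangle :: "(nat \<Rightarrow> nat set set) \<Rightarrow> nat \<Rightarrow> nat \<Rightarrow> nat \<Rightarrow> nat \<Rightarrow> bool" where
  "is_triangle G i v u w \<longleftrightarrow> {v, u} \<in> G i \<and> {u, w} \<in> G i \<and> {v, w} \<in> G i"

definition answers_sound :: "alg \<Rightarrow> nat \<Rightarrow> (nat \<Rightarrow> nat set set) \<Rightarrow> bool" where
  "answers_sound A n G \<longleftrightarrow>
     (\<forall>i v u w. 1 \<le> i \<and> v < n \<and> u < n \<and> w < n \<longrightarrow>
        query A n v (run A n G i v) u w \<in>
          {AnsInconsistent, if is_triangle G i v u w then AnsTrue else AnsFalse})"

definition inconsistent_at :: "alg \<Rightarrow> nat \<Rightarrow> (nat \<Rightarrow> nat set set) \<Rightarrow> nat \<Rightarrow> nat \<Rightarrow> bool" where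
  "inconsistent_at A n G i v \<longleftrightarrow>
     (\<exists>u w. u < n \<and> w < n \<and> query A n v (run A n G i v) u w = AnsInconsistent)"

definition amortized_le :: "alg \<Rightarrow> nat \<Rightarrow> (nat \<Rightarrow> nat set set) \<Rightarrow> nat \<Rightarrow> bool" where
  "amortized_le A n G k \<longleftrightarrow>
     (\<forall>i. card {j \<in> {1..i}. \<exists>v<n. inconsistent_at A n G j v}
            \<le> k * (\<Sum>j\<in>{1..i}. changes G j))"

end

theory Submission
  imports Defs
begin


definition mk :: "nat set \<Rightarrow> (nat \<Rightarrow> nat \<Rightarrow> bool) \<Rightarrow> (nat \<Rightarrow> nat set) \<Rightarrow> (nat \<Rightarrow> nat set) \<Rightarrow> bool \<Rightarrow> nat list set" where
  "mk N T P R ok = {[0,x] |x. x \<in> N} \<union> {[1,a,b] |a b. T a b} \<union> {[2,x,y] |x y. y \<in> P x}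
     \<union> {[3,x,y] |x y. y \<in> R x} \<union> (if ok then {[4]} else {})"

definition nbS :: "nat list set \<Rightarrow> nat set" where "nbS s = {x. [0,x] \<in> s}"
definition tbS :: "nat list set \<Rightarrow> nat \<Rightarrow> nat \<Rightarrow> bool" where "tbS s a b = ([1,a,b] \<in> s)"
definition pqS :: "nat list set \<Rightarrow> nat \<Rightarrow> nat set" where "pqS s x = {y. [2,x,y] \<in> s}"
definition rqS :: "nat list set \<Rightarrow> nat \<Rightarrow> nat set" where "rqS s x = {y. [3,x,y] \<in> s}"
definition okS :: "nat list set \<Rightarrow> bool" where "okS s = ([4] \<in> s)"

lemma mk_sel[simp]:
  "nbS (mk N T P R ok) = N" "tbS (mk N T P R ok) a b = T a b" "pqS (mk N T P R ok) x = P x"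
  "rqS (mk N T P R ok) x = R x" "okS (mk N T P R ok) = ok"
  by (auto simp: mk_def nbS_def tbS_def pqS_def rqS_def okS_def)

fun ic :: "(nat \<times> bool) option \<Rightarrow> nat" where
  "ic None = 0"
| "ic (Some (y, b)) = 2 * y + 1 + (if b then 1 else 0)"

definition icd :: "nat \<Rightarrow> (nat \<times> bool) option" where
  "icd k = (if k = 0 then None else Some ((k - 1) div 2, odd (k - 1)))"

lemma icd_ic[simp]: "icd (ic x) = x"
proof (cases x)
  case (Some z) then show ?thesis by (cases z; cases "snd z") (auto simp: icd_def)
qed (simp add: icd_def)

lemma modB: "(a::nat) < B \<Longrightarrow> (a + B * b) mod B = a" by simp
lemma divB: "(a::nat) < B \<Longrightarrow> (a + B * b) div B = b" by simp

definition nN :: "nat list set \<Rightarrow> nat set \<Rightarrow> nat set \<Rightarrow> nat set" where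
  "nN s I D = (nbS s - D) \<union> I"
definition P1 :: "nat list set \<Rightarrow> nat set \<Rightarrow> nat set \<Rightarrow> nat \<Rightarrow> nat set" where
  "P1 s I D x = (if x \<in> I then {} else pqS s x) \<union> ((I \<union> D) - {x})"
definition R1 :: "nat list set \<Rightarrow> nat set \<Rightarrow> nat \<Rightarrow> nat set" where
  "R1 s I x = (if x \<in> I then {} else rqS s x)"
definition pick :: "nat set \<Rightarrow> nat option" where
  "pick S = (if S = {} then None else Some (Min S))"

definition msgf :: "nat \<Rightarrow> nat \<Rightarrow> nat list set \<Rightarrow> nat set \<Rightarrow> nat set \<Rightarrow> nat \<Rightarrow> nat option" where
  "msgf n v s I D z = (let p = map_option (\<lambda>y. (y, y \<in> nN s I D)) (pick (P1 s I D z));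
      r = map_option (\<lambda>y. (y, y \<in> nN s I D)) (pick (R1 s I z)) in
      if p = None \<and> r = None then None else Some (ic p + (2 * n + 1) * ic r))"

definition prim :: "nat \<Rightarrow> nat option \<Rightarrow> (nat \<times> bool) option" where
  "prim n m = (case m of None \<Rightarrow> None | Some k \<Rightarrow> icd (k mod (2 * n + 1)))"
definition repl :: "nat \<Rightarrow> nat option \<Rightarrow> (nat \<times> bool) option" where
  "repl n m = (case m of None \<Rightarrow> None | Some k \<Rightarrow> icd (k div (2 * n + 1)))"
definition got :: "nat \<Rightarrow> (nat \<Rightarrow> nat option) \<Rightarrow> nat \<Rightarrow> nat \<Rightarrow> bool \<Rightarrow> bool" where
  "got n inbox a b st = (prim n (inbox a) = Some (b, st) \<or> repl n (inbox a) = Some (b, st))"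

definition updf :: "nat \<Rightarrow> nat \<Rightarrow> nat list set \<Rightarrow> nat set \<Rightarrow> nat set \<Rightarrow> (nat \<Rightarrow> nat option) \<Rightarrow> nat list set" where
  "updf n v s I D inbox = mk (nN s I D)
     (\<lambda>a b. if (\<exists>st. got n inbox a b st \<or> got n inbox b a st)
            then (got n inbox a b True \<or> got n inbox b a True) else tbS s a b)
     (\<lambda>x. P1 s I D x - {Min (P1 s I D x)})
     (\<lambda>x. (R1 s I x - {Min (R1 s I x)}) \<union> {y. \<exists>st. prim n (inbox x) = Some (y, st)})
     (\<forall>x \<in> nN s I D. inbox x = None \<and> P1 s I D x = {})"

definition queryf :: "nat \<Rightarrow> nat \<Rightarrow> nat list set \<Rightarrow> nat \<Rightarrow> nat \<Rightarrow> answer" where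
  "queryf n v s u w = (if \<not> okS s then AnsInconsistent
     else if u \<in> nbS s \<and> w \<in> nbS s \<and> u \<noteq> w \<and> tbS s u w then AnsTrue else AnsFalse)"

definition theAlg :: alg where
  "theAlg = \<lparr>init = (\<lambda>n v. mk {} (\<lambda>_ _. False) (\<lambda>_. {}) (\<lambda>_. {}) True), msg = msgf, upd = updf,
            query = queryf\<rparr>"

lemma theAlg_sel[simp]: "init theAlg = (\<lambda>n v. mk {} (\<lambda>_ _. False) (\<lambda>_. {}) (\<lambda>_. {}) True)"
  "msg theAlg = msgf" "upd theAlg = updf" "query theAlg = queryf"
  by (simp_all add: theAlg_def)

lemma ic_less: "(\<And>y b. x = Some (y, b) \<Longrightarrow> y < n) \<Longrightarrow> ic x < 2 * n + 1"
  by (cases x) auto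

lemma pick_less: "S \<subseteq> {..<n} \<Longrightarrow> pick S = Some y \<Longrightarrow> y < n"
proof -
  assume a: "S \<subseteq> {..<n}" "pick S = Some y"
  then have "S \<noteq> {}" "y = Min S" by (auto simp: pick_def split: if_splits)
  moreover have "finite S" using a(1) finite_subset by blast
  ultimately show ?thesis using a(1) Min_in by blast
qed

lemma decode:
  assumes "P1 s I D z \<subseteq> {..<n}" "R1 s I z \<subseteq> {..<n}"
  shows "prim n (msgf n v s I D z) = map_option (\<lambda>y. (y, y \<in> nN s I D)) (pick (P1 s I D z))"
    and "repl n (msgf n v s I D z) = map_option (\<lambda>y. (y, y \<in> nN s I D)) (pick (R1 s I z))"
proof -
  define p where "p = map_option (\<lambda>y. (y, y \<in> nN s I D)) (pick (P1 s I D z))"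
  define r where "r = map_option (\<lambda>y. (y, y \<in> nN s I D)) (pick (R1 s I z))"
  have lp: "ic p < 2 * n + 1" using pick_less[OF assms(1)] by (intro ic_less) (auto simp: p_def)
  have lr: "ic r < 2 * n + 1" using pick_less[OF assms(2)] by (intro ic_less) (auto simp: r_def)
  have m: "msgf n v s I D z = (if p = None \<and> r = None then None else Some (ic p + (2 * n + 1) * ic r))"
    by (simp add: msgf_def p_def r_def Let_def)
  have md: "(ic p + (2 * n + 1) * ic r) mod (2 * n + 1) = ic p" using modB[OF lp] .
  have dv: "(ic p + (2 * n + 1) * ic r) div (2 * n + 1) = ic r" using divB[OF lp] .
  show "prim n (msgf n v s I D z) = p" unfolding m prim_def using md by (auto)
  show "repl n (msgf n v s I D z) = r" unfolding m repl_def using dv by (auto)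
qed



locale net =
  fixes n :: nat and G :: "nat \<Rightarrow> nat set set"
  assumes valid: "valid_dyn_graph n G"
begin

abbreviation S where "S t v \<equiv> run theAlg n G t v"
abbreviation Nb where "Nb t v \<equiv> {u. {v, u} \<in> G t}"
abbreviation II where "II t v \<equiv> inserted G t v"
abbreviation DD where "DD t v \<equiv> deleted G t v"
definition Pa where "Pa t x z = P1 (S t x) (II (Suc t) x) (DD (Suc t) x) z"
definition Ra where "Ra t x z = R1 (S t x) (II (Suc t) x) z"
definition inb where "inb t v = (\<lambda>u. if {u, v} \<in> G (Suc t)
   then msgf n u (S t u) (II (Suc t) u) (DD (Suc t) u) v else None)"

lemma G0: "G 0 = {}" using valid by (simp add: valid_dyn_graph_def)

lemma edge: "{x, y} \<in> G t \<Longrightarrow> x < n \<and> y < n \<and> x \<noteq> y"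
proof -
  assume "{x, y} \<in> G t"
  then obtain u v where "{x, y} = {u, v}" "u \<noteq> v" "u < n" "v < n"
    using valid unfolding valid_dyn_graph_def by blast
  then show ?thesis by (metis doubleton_eq_iff)
qed

lemma ID_sub: "II t v \<union> DD t v \<subseteq> {..<n}"
  using edge by (auto simp: inserted_def deleted_def)

lemma S_Suc: "S (Suc t) v = updf n v (S t v) (II (Suc t) v) (DD (Suc t) v) (inb t v)"
  by (simp only: run.simps theAlg_sel inb_def)

declare run.simps(2)[simp del]

lemma basic: "nbS (S t v) = Nb t v \<and> (\<forall>z. pqS (S t v) z \<subseteq> {..<n} \<and> rqS (S t v) z \<subseteq> {..<n})"
proof (induction t arbitrary: v)
  case 0
  then show ?case by (simp add: G0)
next
  case (Suc t)
  have P1s: "P1 (S t x) (II (Suc t) x) (DD (Suc t) x) z \<subseteq> {..<n}" for x z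
    using Suc.IH[of x] ID_sub[of "Suc t" x] by (auto simp: P1_def)
  have R1s: "R1 (S t x) (II (Suc t) x) z \<subseteq> {..<n}" for x z
    using Suc.IH[of x] by (auto simp: R1_def)
  have nb: "nbS (S (Suc t) v) = Nb (Suc t) v"
    using Suc.IH[of v] by (auto simp: S_Suc updf_def nN_def inserted_def deleted_def)
  have pq: "pqS (S (Suc t) v) z \<subseteq> {..<n}" for z
    using P1s[of v z] by (auto simp: S_Suc updf_def)
  have prim: "prim n (inb t v z) = Some (y, st) \<Longrightarrow> y < n" for z y st
  proof -
    assume a: "prim n (inb t v z) = Some (y, st)"
    then have l: "{z, v} \<in> G (Suc t)" by (auto simp: inb_def prim_def split: if_splits)
    then have "prim n (inb t v z) = map_option (\<lambda>y. (y, y \<in> nN (S t z) (II (Suc t) z) (DD (Suc t) z)))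
        (pick (P1 (S t z) (II (Suc t) z) (DD (Suc t) z) v))"
      unfolding inb_def using decode(1)[OF P1s R1s] by simp
    then show ?thesis using a pick_less[OF P1s]
      by (cases "pick (P1 (S t z) (II (Suc t) z) (DD (Suc t) z) v)") auto
  qed
  have rq: "rqS (S (Suc t) v) z \<subseteq> {..<n}" for z
    using R1s[of v z] prim[of z] by (auto simp: S_Suc updf_def)
  show ?case using nb pq rq by blast
qed

lemma nbS_S[simp]: "nbS (S t v) = Nb t v" using basic by blast

lemma Pa_sub: "Pa t x z \<subseteq> {..<n}"
  using basic[of t x] ID_sub[of "Suc t" x] by (auto simp: P1_def Pa_def)
lemma Ra_sub: "Ra t x z \<subseteq> {..<n}"
  using basic[of t x] by (auto simp: R1_def Ra_def)
lemma Pa_fin[simp]: "finite (Pa t x z)" by (rule finite_subset[OF Pa_sub]) simp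
lemma Ra_fin[simp]: "finite (Ra t x z)" by (rule finite_subset[OF Ra_sub]) simp

lemma nN_eq: "nN (S t x) (II (Suc t) x) (DD (Suc t) x) = Nb (Suc t) x"
  by (auto simp: nN_def inserted_def deleted_def)

lemma prim_inb: "prim n (inb t v u) = (if {u, v} \<in> G (Suc t) then
    map_option (\<lambda>y. (y, {u, y} \<in> G (Suc t))) (pick (Pa t u v)) else None)"
  using decode(1)[OF Pa_sub[unfolded Pa_def] Ra_sub[unfolded Ra_def]]
  by (simp add: inb_def nN_eq Pa_def prim_def)

lemma repl_inb: "repl n (inb t v u) = (if {u, v} \<in> G (Suc t) then
    map_option (\<lambda>y. (y, {u, y} \<in> G (Suc t))) (pick (Ra t u v)) else None)"
  using decode(2)[OF Pa_sub[unfolded Pa_def] Ra_sub[unfolded Ra_def]]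
  by (simp add: inb_def nN_eq Ra_def repl_def)

lemma inb_None: "(inb t v u = None) = ({u, v} \<notin> G (Suc t) \<or> (Pa t u v = {} \<and> Ra t u v = {}))"
  by (auto simp: inb_def msgf_def Let_def pick_def Pa_def Ra_def)

lemma pq_Suc: "pqS (S (Suc t) x) z = Pa t x z - {Min (Pa t x z)}"
  by (simp add: S_Suc updf_def Pa_def)

lemma rq_Suc: "rqS (S (Suc t) z) x = (Ra t z x - {Min (Ra t z x)}) \<union>
   (if {x, z} \<in> G (Suc t) \<and> Pa t x z \<noteq> {} then {Min (Pa t x z)} else {})"
  by (auto simp: S_Suc updf_def Ra_def prim_inb pick_def)

lemma ok_Suc: "okS (S (Suc t) v) = (\<forall>x \<in> Nb (Suc t) v. Pa t x v = {} \<and> Ra t x v = {} \<and> Pa t v x = {})"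
proof -
  have a: "okS (S (Suc t) v) = (\<forall>x \<in> Nb (Suc t) v. inb t v x = None \<and> Pa t v x = {})"
    by (simp add: S_Suc updf_def nN_eq Pa_def)
  have b: "x \<in> Nb (Suc t) v \<Longrightarrow> {x, v} \<in> G (Suc t)" for x by (simp add: insert_commute)
  show ?thesis unfolding a using b by (auto simp: inb_None)
qed

definition sentto where "sentto t x v y = (Pa t x v \<noteq> {} \<and> Min (Pa t x v) = y \<or> Ra t x v \<noteq> {} \<and> Min (Ra t x v) = y)"

lemma got_iff: "{a, v} \<in> G (Suc t) \<Longrightarrow> got n (inb t v) a b st = (sentto t a v b \<and> st = ({a, b} \<in> G (Suc t)))"
  by (auto simp: got_def prim_inb repl_inb sentto_def pick_def)

lemma tb_Suc: "a \<in> Nb (Suc t) v \<Longrightarrow> b \<in> Nb (Suc t) v \<Longrightarrow>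
  tbS (S (Suc t) v) a b = (if sentto t a v b \<or> sentto t b v a then {a, b} \<in> G (Suc t) else tbS (S t v) a b)"
proof -
  assume ab: "a \<in> Nb (Suc t) v" "b \<in> Nb (Suc t) v"
  have e: "{a, v} = {v, a}" "{b, v} = {v, b}" "{b, a} = {a, b}" by blast+
  have la: "{a, v} \<in> G (Suc t)" "{b, v} \<in> G (Suc t)" using ab e by auto
  have x: "tbS (S (Suc t) v) a b = (if \<exists>st. got n (inb t v) a b st \<or> got n (inb t v) b a st
      then got n (inb t v) a b True \<or> got n (inb t v) b a True else tbS (S t v) a b)"
    by (simp add: S_Suc updf_def)
  show ?thesis unfolding x got_iff[OF la(1)] got_iff[OF la(2)] e(3) by auto
qed

end


context net begin

definition inv where "inv t = (\<forall>v a b. a \<in> Nb t v \<longrightarrow> b \<in> Nb t v \<longrightarrow> a \<noteq> b \<longrightarrow>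
   (tbS (S t v) a b = ({a, b} \<in> G t) \<or> b \<in> pqS (S t a) v \<or> b \<in> rqS (S t a) v \<or>
    a \<in> pqS (S t b) v \<or> a \<in> rqS (S t b) v \<or> a \<in> pqS (S t v) b \<or> b \<in> pqS (S t v) a))"

lemma prog1: "b \<in> Pa t a v \<Longrightarrow> sentto t a v b \<or> b \<in> pqS (S (Suc t) a) v"
  by (auto simp: pq_Suc sentto_def)

lemma prog2: "b \<in> Ra t a v \<Longrightarrow> sentto t a v b \<or> b \<in> rqS (S (Suc t) a) v"
  by (auto simp: rq_Suc sentto_def)

lemma prog3: "{v, b} \<in> G (Suc t) \<Longrightarrow> a \<in> Pa t v b \<Longrightarrow> a \<in> pqS (S (Suc t) v) b \<or> a \<in> rqS (S (Suc t) b) v"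
  by (auto simp: pq_Suc rq_Suc)

lemma Pa_ch: "y \<in> II (Suc t) x \<union> DD (Suc t) x \<Longrightarrow> y \<noteq> z \<Longrightarrow> y \<in> Pa t x z"
  by (auto simp: Pa_def P1_def)

lemma Pa_old: "z \<notin> II (Suc t) x \<Longrightarrow> y \<in> pqS (S t x) z \<Longrightarrow> y \<in> Pa t x z"
  by (auto simp: Pa_def P1_def)

lemma Ra_old: "z \<notin> II (Suc t) x \<Longrightarrow> y \<in> rqS (S t x) z \<Longrightarrow> y \<in> Ra t x z"
  by (auto simp: Ra_def R1_def)

lemma ins_sym: "(v \<in> II t a) = (a \<in> II t v)"
  by (simp add: inserted_def insert_commute)

lemma inv0: "inv 0" by (simp add: inv_def G0)

lemma inv_Suc: assumes IH: "inv t" shows "inv (Suc t)"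
  unfolding inv_def
proof (intro allI impI)
  fix v a b
  assume a: "a \<in> Nb (Suc t) v" and b: "b \<in> Nb (Suc t) v" and ab: "a \<noteq> b"
  let ?G = "({a, b} \<in> G (Suc t))"
  let ?goal = "tbS (S (Suc t) v) a b = ?G \<or> b \<in> pqS (S (Suc t) a) v \<or> b \<in> rqS (S (Suc t) a) v \<or>
    a \<in> pqS (S (Suc t) b) v \<or> a \<in> rqS (S (Suc t) b) v \<or> a \<in> pqS (S (Suc t) v) b \<or> b \<in> pqS (S (Suc t) v) a"
  have la: "{v, a} \<in> G (Suc t)" and lb: "{v, b} \<in> G (Suc t)" using a b by auto
  have tbs: "sentto t a v b \<or> sentto t b v a \<Longrightarrow> tbS (S (Suc t) v) a b = ?G"
    using tb_Suc[OF a b] by simp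
  have tbn: "\<not> (sentto t a v b \<or> sentto t b v a) \<Longrightarrow> tbS (S (Suc t) v) a b = tbS (S t v) a b"
    using tb_Suc[OF a b] by simp
  have PA: "b \<in> Pa t a v \<Longrightarrow> ?goal" using prog1[of b t a v] tbs by blast
  have PB: "a \<in> Pa t b v \<Longrightarrow> ?goal" using prog1[of a t b v] tbs by blast
  have RA: "b \<in> Ra t a v \<Longrightarrow> ?goal" using prog2[of b t a v] tbs by blast
  have RB: "a \<in> Ra t b v \<Longrightarrow> ?goal" using prog2[of a t b v] tbs by blast
  have VB: "a \<in> Pa t v b \<Longrightarrow> ?goal" using prog3[OF lb, of a] by blast
  have VA: "b \<in> Pa t v a \<Longrightarrow> ?goal" using prog3[OF la, of b] by blast
  show ?goal
  proof (cases "a \<in> II (Suc t) v")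
    case True then show ?thesis using VB Pa_ch[of a t v b] ab by blast
  next
    case na: False
    show ?thesis
    proof (cases "b \<in> II (Suc t) v")
      case True then show ?thesis using VA Pa_ch[of b t v a] ab by blast
    next
      case nb: False
      have at: "a \<in> Nb t v" using a na by (auto simp: inserted_def)
      have bt: "b \<in> Nb t v" using b nb by (auto simp: inserted_def)
      have nva: "v \<notin> II (Suc t) a" using na ins_sym by blast
      have nvb: "v \<notin> II (Suc t) b" using nb ins_sym by blast
      have bv: "b \<noteq> v" using lb edge by blast
      show ?thesis
      proof (cases "b \<in> II (Suc t) a \<union> DD (Suc t) a")
        case True then show ?thesis using PA Pa_ch[of b t a v] bv by blast
      next
        case False
        then have same: "({a, b} \<in> G t) = ?G" by (auto simp: inserted_def deleted_def)
        have "tbS (S t v) a b = ({a, b} \<in> G t) \<or> b \<in> pqS (S t a) v \<or> b \<in> rqS (S t a) v \<or>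
          a \<in> pqS (S t b) v \<or> a \<in> rqS (S t b) v \<or> a \<in> pqS (S t v) b \<or> b \<in> pqS (S t v) a"
          using IH at bt ab unfolding inv_def by blast
        then show ?thesis
        proof (elim disjE)
          assume h: "tbS (S t v) a b = ({a, b} \<in> G t)"
          show ?thesis
          proof (cases "sentto t a v b \<or> sentto t b v a")
            case True then show ?thesis using tbs by blast
          next
            case False then show ?thesis using tbn h same by simp
          qed
        next
          assume "b \<in> pqS (S t a) v" then show ?thesis using PA Pa_old[OF nva] by blast
        next
          assume "b \<in> rqS (S t a) v" then show ?thesis using RA Ra_old[OF nva] by blast
        next
          assume "a \<in> pqS (S t b) v" then show ?thesis using PB Pa_old[OF nvb] by blast
        next
          assume "a \<in> rqS (S t b) v" then show ?thesis using RB Ra_old[OF nvb] by blast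
        next
          assume "a \<in> pqS (S t v) b" then show ?thesis using VB Pa_old[OF nb] by blast
        next
          assume "b \<in> pqS (S t v) a" then show ?thesis using VA Pa_old[OF na] by blast
        qed
      qed
    qed
  qed
qed

lemma inv_all: "inv t"
  by (induction t) (auto intro: inv0 inv_Suc)

end


context net begin

lemma ok_empty:
  assumes ok: "okS (S (Suc t) v)" and x: "x \<in> Nb (Suc t) v"
  shows "pqS (S (Suc t) x) v = {}" "rqS (S (Suc t) x) v = {}" "pqS (S (Suc t) v) x = {}"
proof -
  have e: "Pa t x v = {}" "Ra t x v = {}" "Pa t v x = {}" using ok x ok_Suc by blast+
  show "pqS (S (Suc t) x) v = {}" using e by (simp add: pq_Suc)
  show "rqS (S (Suc t) x) v = {}" using e by (simp add: rq_Suc)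
  show "pqS (S (Suc t) v) x = {}" using e by (simp add: pq_Suc)
qed

lemma sound: "answers_sound theAlg n G"
  unfolding answers_sound_def
proof (intro allI impI)
  fix i v u w :: nat
  assume h: "1 \<le> i \<and> v < n \<and> u < n \<and> w < n"
  then obtain t where i: "i = Suc t" by (cases i) auto
  show "query theAlg n v (S i v) u w \<in> {AnsInconsistent, if is_triangle G i v u w then AnsTrue else AnsFalse}"
  proof (cases "okS (S i v)")
    case False then show ?thesis by (simp add: queryf_def)
  next
    case ok: True
    have tb: "tbS (S i v) u w = ({u, w} \<in> G i)" if "u \<in> Nb i v" "w \<in> Nb i v" "u \<noteq> w"
      using inv_all[of i] that ok_empty[OF ok[unfolded i]] unfolding inv_def i by blast
    have uw: "{u, u} \<notin> G i" using edge[of u u i] by blast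
    show ?thesis using ok tb uw
      by (cases "u = w") (auto simp: queryf_def is_triangle_def)
  qed
qed

lemma msg_bound: "msgs_bounded theAlg 4 n G"
  unfolding msgs_bounded_def
proof (intro allI impI)
  fix i u v m :: nat
  assume h: "u < n \<and> v < n \<and> {u, v} \<in> G (Suc i) \<and>
       msg theAlg n u (S i u) (II (Suc i) u) (DD (Suc i) u) v = Some m"
  define B where "B = 2 * n + 1"
  define p where "p = map_option (\<lambda>y. (y, y \<in> nN (S i u) (II (Suc i) u) (DD (Suc i) u))) (pick (Pa i u v))"
  define r where "r = map_option (\<lambda>y. (y, y \<in> nN (S i u) (II (Suc i) u) (DD (Suc i) u))) (pick (Ra i u v))"
  have m: "m = ic p + B * ic r" using h
    by (auto simp: msgf_def p_def r_def B_def Let_def Pa_def Ra_def split: if_splits)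
  have lp: "ic p < B" unfolding B_def using pick_less[OF Pa_sub] by (intro ic_less) (auto simp: p_def)
  have lr: "ic r < B" unfolding B_def using pick_less[OF Ra_sub] by (intro ic_less) (auto simp: r_def)
  have "B * ic r \<le> B * (B - 1)" using lr by simp
  moreover have "B + B * (B - 1) = B * B" unfolding B_def by (simp add: algebra_simps)
  ultimately have "m < B * B" using lp unfolding m by linarith
  moreover have "(n + 1) * (n + 1) = n * n + B" by (simp add: B_def algebra_simps)
  then have Bl: "B \<le> (n + 1) * (n + 1)" by (metis le_add2)
  have "B * B \<le> ((n + 1) * (n + 1)) * ((n + 1) * (n + 1))" by (rule mult_le_mono[OF Bl Bl])
  moreover have "((n + 1) * (n + 1)) * ((n + 1) * (n + 1)) = (n + 1) ^ 4"
    by (simp add: numeral_eq_Suc algebra_simps)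
  ultimately show "m < (n + 1) ^ 4" by simp
qed

end


context net begin

definition psi where "psi t x z = (if {x, z} \<in> G t then 2 * card (pqS (S t x) z) + card (rqS (S t z) x) else 0)"
definition Phi where "Phi t = Max (insert 0 ((\<lambda>(x, z). psi t x z) ` ({..<n} \<times> {..<n})))"
definition busy where "busy t = (\<exists>x<n. \<exists>z<n. {x, z} \<in> G (Suc t) \<and> (Pa t x z \<noteq> {} \<or> Ra t z x \<noteq> {}))"

lemma Phi_le: "(Phi t \<le> M) = (\<forall>x<n. \<forall>z<n. psi t x z \<le> M)"
  unfolding Phi_def by (subst Max_le_iff) auto

lemma psi_le: "x < n \<Longrightarrow> z < n \<Longrightarrow> psi t x z \<le> Phi t"
  using Phi_le[of t "Phi t"] by blast

lemma Phi0: "Phi 0 = 0"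
  using Phi_le[of 0 0] by (simp add: psi_def G0)

lemma G_fin: "finite (G t)"
proof -
  have "G t \<subseteq> Pow {..<n}" using valid unfolding valid_dyn_graph_def by fastforce
  then show ?thesis by (rule finite_subset) simp
qed

lemma C_card: "card (II (Suc t) x \<union> DD (Suc t) x) \<le> changes G (Suc t)"
proof -
  let ?f = "\<lambda>y. {x, y}"
  have "card (II (Suc t) x \<union> DD (Suc t) x) \<le> card ((G (Suc t) - G t) \<union> (G t - G (Suc t)))"
  proof (rule card_inj_on_le)
    show "inj_on ?f (II (Suc t) x \<union> DD (Suc t) x)" by (auto simp: inj_on_def doubleton_eq_iff)
    show "?f ` (II (Suc t) x \<union> DD (Suc t) x) \<subseteq> (G (Suc t) - G t) \<union> (G t - G (Suc t))"
      by (auto simp: inserted_def deleted_def)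
    show "finite ((G (Suc t) - G t) \<union> (G t - G (Suc t)))" using G_fin by simp
  qed
  then show ?thesis by (simp add: changes_def)
qed

lemma psi_idle: "Pa t x z = {} \<Longrightarrow> Ra t z x = {} \<Longrightarrow> psi (Suc t) x z = 0"
  by (simp add: psi_def pq_Suc rq_Suc)

lemma card_rm_min: "finite P \<Longrightarrow> card (P - {Min P}) = card P - (if P = {} then 0 else 1)"
  by (cases "P = {}") (auto simp: card_Diff_singleton)

lemma pair:
  assumes x: "x < n" and z: "z < n" and l: "{x, z} \<in> G (Suc t)"
  shows "psi (Suc t) x z + (if Pa t x z \<noteq> {} \<or> Ra t z x \<noteq> {} then 1 else 0) \<le> Phi t + 2 * changes G (Suc t)"
proof -
  define P where "P = Pa t x z"
  define R where "R = Ra t z x"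
  define C where "C = II (Suc t) x \<union> DD (Suc t) x"
  define base where "base = (if z \<in> II (Suc t) x then {} else pqS (S t x) z)"
  have finC: "finite C" unfolding C_def using ID_sub finite_subset by blast
  have finb: "finite base" unfolding base_def using basic[of t x] finite_subset by (auto intro: finite_subset[of _ "{..<n}"])
  have PE: "P = base \<union> (C - {z})" by (simp add: P_def Pa_def P1_def base_def C_def)
  have cP: "card P \<le> card base + card C"
  proof -
    have "card P \<le> card base + card (C - {z})" unfolding PE by (rule card_Un_le)
    moreover have "card (C - {z}) \<le> card C" by (rule card_Diff1_le)
    ultimately show ?thesis by simp
  qed
  have cC: "card C \<le> changes G (Suc t)" unfolding C_def by (rule C_card)
  have old: "2 * card base + card R \<le> Phi t"
  proof (cases "z \<in> II (Suc t) x")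
    case True
    then have "x \<in> II (Suc t) z" using ins_sym by blast
    then show ?thesis using True by (simp add: base_def R_def Ra_def R1_def)
  next
    case False
    then have "x \<notin> II (Suc t) z" using ins_sym by blast
    moreover have "{x, z} \<in> G t" using False l by (auto simp: inserted_def)
    ultimately have "psi t x z = 2 * card base + card R"
      using False by (simp add: psi_def base_def R_def Ra_def R1_def)
    then show ?thesis using psi_le[OF x z, of t] by simp
  qed
  have new: "psi (Suc t) x z \<le> 2 * (card P - (if P = {} then 0 else 1)) +
     (card R - (if R = {} then 0 else 1) + (if P = {} then 0 else 1))"
  proof -
    have a: "psi (Suc t) x z = 2 * card (P - {Min P}) + card ((R - {Min R}) \<union> (if P \<noteq> {} then {Min P} else {}))"
      using l by (simp add: psi_def pq_Suc rq_Suc P_def R_def)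
    have b: "card ((R - {Min R}) \<union> (if P \<noteq> {} then {Min P} else {})) \<le> card (R - {Min R}) + card (if P \<noteq> {} then {Min P} else {})"
      by (rule card_Un_le)
    have c: "card (if P \<noteq> {} then {Min P} else {}) = (if P = {} then 0 else 1)" by simp
    show ?thesis unfolding a using b c card_rm_min[of P] card_rm_min[of R]
      by (simp add: P_def R_def)
  qed
  have pc: "(P = {}) = (card P = 0)" using P_def by simp
  have rc: "(R = {}) = (card R = 0)" using R_def by simp
  show ?thesis using new cP cC old pc rc unfolding P_def[symmetric] R_def[symmetric]
    by (auto split: if_splits)
qed

lemma step: "Phi (Suc t) + (if busy t then 1 else 0) \<le> Phi t + 2 * changes G (Suc t)"
proof -
  let ?M = "Phi t + 2 * changes G (Suc t)"
  have M1: "busy t \<Longrightarrow> 1 \<le> ?M"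
  proof -
    assume "busy t"
    then obtain x z where "x < n" "z < n" "{x, z} \<in> G (Suc t)" "Pa t x z \<noteq> {} \<or> Ra t z x \<noteq> {}"
      unfolding busy_def by blast
    then show ?thesis using pair[of x z t] by simp
  qed
  have all: "psi (Suc t) x z + (if busy t then 1 else 0) \<le> ?M" if x: "x < n" and z: "z < n" for x z
  proof (cases "{x, z} \<in> G (Suc t)")
    case False
    then show ?thesis using M1 by (simp add: psi_def)
  next
    case l: True
    show ?thesis
    proof (cases "Pa t x z \<noteq> {} \<or> Ra t z x \<noteq> {}")
      case True then show ?thesis using pair[OF x z l] by simp
    next
      case False then show ?thesis using psi_idle[of t x z] M1 pair[OF x z l] by auto
    qed
  qed
  have "Phi (Suc t) \<le> ?M - (if busy t then 1 else 0)"
    unfolding Phi_le using all by fastforce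
  then show ?thesis using M1 by (auto split: if_splits)
qed

lemma amort_sum: "(\<Sum>j\<in>{1..i}. if busy (j - 1) then 1 else 0) + Phi i \<le> 2 * (\<Sum>j\<in>{1..i}. changes G j)"
proof (induction i)
  case 0 then show ?case by (simp add: Phi0)
next
  case (Suc i)
  then show ?case using step[of i] by (simp add: sum.cl_ivl_Suc)
qed

lemma incons_busy: "inconsistent_at theAlg n G (Suc t) v \<Longrightarrow> v < n \<Longrightarrow> busy t"
proof -
  assume h: "inconsistent_at theAlg n G (Suc t) v" and v: "v < n"
  then have "\<not> okS (S (Suc t) v)" by (auto simp: inconsistent_at_def queryf_def split: if_splits)
  then obtain x where x: "x \<in> Nb (Suc t) v" and c: "Pa t x v \<noteq> {} \<or> Ra t x v \<noteq> {} \<or> Pa t v x \<noteq> {}"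
    unfolding ok_Suc by blast
  have xn: "x < n" using x edge by blast
  have l1: "{x, v} \<in> G (Suc t)" and l2: "{v, x} \<in> G (Suc t)" using x by (auto simp: insert_commute)
  show "busy t" unfolding busy_def using c xn v l1 l2 by blast
qed

lemma amort: "amortized_le theAlg n G 2"
  unfolding amortized_le_def
proof
  fix i
  have sub: "{j \<in> {1..i}. \<exists>v<n. inconsistent_at theAlg n G j v} \<subseteq> {j \<in> {1..i}. busy (j - 1)}"
  proof
    fix j assume "j \<in> {j \<in> {1..i}. \<exists>v<n. inconsistent_at theAlg n G j v}"
    then obtain v where j: "j \<in> {1..i}" "v < n" "inconsistent_at theAlg n G j v" by blast
    then obtain t where "j = Suc t" by (cases j) auto
    then show "j \<in> {j \<in> {1..i}. busy (j - 1)}" using j incons_busy by auto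
  qed
  have "card {j \<in> {1..i}. \<exists>v<n. inconsistent_at theAlg n G j v} \<le> card {j \<in> {1..i}. busy (j - 1)}"
    using sub by (intro card_mono) auto
  also have "card {j \<in> {1..i}. busy (j - 1)} = (\<Sum>j\<in>{j \<in> {1..i}. busy (j - 1)}. 1)"
    by simp
  also have "\<dots> = (\<Sum>j\<in>{1..i}. if busy (j - 1) then 1 else 0)"
    by (rule sum.inter_filter) simp
  also have "\<dots> \<le> 2 * (\<Sum>j\<in>{1..i}. changes G j)" using amort_sum[of i] by simp
  finally show "card {j \<in> {1..i}. \<exists>v<n. inconsistent_at theAlg n G j v} \<le> 2 * (\<Sum>j\<in>{1..i}. changes G j)" .
qed

end

theorem theorem1:
  "\<exists>(A::alg) (c::nat) (k::nat). \<forall>n G. valid_dyn_graph n G \<longrightarrow>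
      msgs_bounded A c n G \<and> answers_sound A n G \<and> amortized_le A n G k"
proof (intro exI allI impI conjI)
  fix n G assume v: "valid_dyn_graph n G"
  interpret net n G using v by unfold_locales
  show "msgs_bounded theAlg 4 n G" by (rule msg_bound)
  show "answers_sound theAlg n G" by (rule sound)
  show "amortized_le theAlg n G 2" by (rule amort)
qed


end
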